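(* Every plane of $\mathcal W(5,q)$ containing a line of $\mathcal S$ is disjoint from $S_\gamma^G$.
   Context: Let $q$ be an even prime power and $\mathrm{PG}(5,q^2)$ have homogeneous coordinates $(X_1,\dots,X_6)$, points written as column vectors. Let $\Sigma$ be the set of points having a coordinate vector $(\alpha,\alpha^q,\delta_0,\beta,\beta^q,\delta_1)$ with $\alpha,\beta\in\mathbb F_{q^2}$, $\delta_0,\delta_1\in\mathbb F_q$ (a Baer subgeometry $\cong\mathrm{PG}(5,q)$). Let $\Pi=\Sigma\cap\{X_6=0\}$, $\mathcal Q=\Sigma\cap\{X_6=0,\ X_3^2+X_1X_5+X_2X_4=0\}$. Fix $\omega\in\mathbb F_{q^2}\setminus\mathbb F_q$ with $\omega+\omega^q=1$ and let $h(X,Y)=\omega X_1Y_4^q+\omega^qX_1Y_6^q+\omega^qX_2Y_5^q+\omega X_2Y_6^q+X_3Y_6^q+\omega^qX_4Y_1^q+\omega X_5Y_2^q+\omega X_6Y_1^q+\omega^qX_6Y_2^q+X_6Y_3^q$. Restricted to $\Sigma$, $P\perp R\iff h(P,R)=0$ defines a symplectic polarity $\perp$ of $\Sigma$; $\mathcal W(5,q)$ is the associated symplectic polar space (generators are totally isotropic planes). For $a,b,c,d\in\mathbb F_{q^2}$ with $ad+bc=1$ let $M_{a,b,c,d}$ be the $6\times6$ matrix with rows $(a^2,0,0,0,c^2,\tfrac{c(a+c\omega^q)}{\omega})$, $(0,a^{2q},0,c^{2q},0,\tfrac{c^q(a^q+c^q\omega)}{\omega^q})$, $(ab,a^qb^q,1,c^qd^q,cd,\tfrac{d(a+c\omega^q)}{\omega}+\tfrac{d^q(a^q+c^q\omega)}{\omega^q}+\tfrac{1}{\omega^{q+1}})$,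 $(0,b^{2q},0,d^{2q},0,\tfrac{d^q(b^q+d^q\omega)+\omega}{\omega^q})$, $(b^2,0,0,0,d^2,\tfrac{d(b+d\omega^q)+\omega^q}{\omega})$, $(0,0,0,0,0,1)$, and let $G$ be the group of projectivities $X\mapsto M_{a,b,c,d}X$. Fix $\gamma\in\mathbb F_{q^2}$ with $X^2+X+\gamma$ irreducible over $\mathbb F_{q^2}$, let $S_\gamma=\left(\frac{\gamma}{\omega},\frac{\gamma^q}{\omega^q},\frac{\omega^q\gamma}{\omega}+\frac{\omega\gamma^q}{\omega^q},1,1,1\right)$ and $S_\gamma^G$ its $G$-orbit. Let $\mathcal S$ be the set of the $q^2+1$ lines $S_t=\{(\lambda,\lambda^q,\lambda t+\lambda^qt^q,\lambda^qt^{2q},\lambda t^2,0):\lambda\in\mathbb F_{q^2}^*\}$, $t\in\mathbb F_{q^2}$, and $S_\infty=\{(0,0,0,\lambda^q,\lambda,0):\lambda\in\mathbb F_{q^2}^*\}$. *)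

theory Defs
  imports "HOL-Computational_Algebra.Polynomial"
begin

text \<open>Vectors of F^6 (F = GF(q^2)) as 6-tuples; projective points as the set of
  nonzero scalar multiples of a nonzero vector.\<close>

type_synonym 'a vec6 = "'a \<times> 'a \<times> 'a \<times> 'a \<times> 'a \<times> 'a"

definition zero6 :: "'a::field vec6" where
  "zero6 = (0,0,0,0,0,0)"

fun smul6 :: "'a::field \<Rightarrow> 'a vec6 \<Rightarrow> 'a vec6" where
  "smul6 c (x1,x2,x3,x4,x5,x6) = (c*x1,c*x2,c*x3,c*x4,c*x5,c*x6)"

fun add6 :: "'a::field vec6 \<Rightarrow> 'a vec6 \<Rightarrow> 'a vec6" where
  "add6 (x1,x2,x3,x4,x5,x6) (y1,y2,y3,y4,y5,y6) = (x1+y1,x2+y2,x3+y3,x4+y4,x5+y5,x6+y6)"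

definition pt :: "'a::field vec6 \<Rightarrow> 'a vec6 set" where
  "pt v = {smul6 c v | c. c \<noteq> 0}"

definition Fq :: "nat \<Rightarrow> 'a::field set" where
  "Fq q = {x. x ^ q = x}"

text \<open>Canonical coordinate vectors of the Baer subgeometry Sigma (an F_q-space).\<close>
definition SigmaVecs :: "nat \<Rightarrow> 'a::field vec6 set" where
  "SigmaVecs q = {(\<alpha>, \<alpha>^q, \<delta>0, \<beta>, \<beta>^q, \<delta>1) | \<alpha> \<beta> \<delta>0 \<delta>1. \<delta>0 \<in> Fq q \<and> \<delta>1 \<in> Fq q}"

fun hform :: "nat \<Rightarrow> 'a::field \<Rightarrow> 'a vec6 \<Rightarrow> 'a vec6 \<Rightarrow> 'a" where
  "hform q \<omega> (x1,x2,x3,x4,x5,x6) (y1,y2,y3,y4,y5,y6) =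
     \<omega>*x1*y4^q + \<omega>^q*x1*y6^q + \<omega>^q*x2*y5^q + \<omega>*x2*y6^q + x3*y6^q
     + \<omega>^q*x4*y1^q + \<omega>*x5*y2^q + \<omega>*x6*y1^q + \<omega>^q*x6*y2^q + x6*y3^q"

definition perp :: "nat \<Rightarrow> 'a::field \<Rightarrow> 'a vec6 set \<Rightarrow> 'a vec6 set \<Rightarrow> bool" where
  "perp q \<omega> P R \<longleftrightarrow> (\<forall>x\<in>P. \<forall>y\<in>R. hform q \<omega> x y = 0)"

definition Sigma_plane :: "nat \<Rightarrow> 'a::field vec6 set set \<Rightarrow> bool" where
  "Sigma_plane q P \<longleftrightarrow>
     (\<exists>u v w. u \<in> SigmaVecs q \<and> v \<in> SigmaVecs q \<and> w \<in> SigmaVecs q \<and>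
        (\<forall>a b c. a \<in> Fq q \<and> b \<in> Fq q \<and> c \<in> Fq q \<and>
            add6 (smul6 a u) (add6 (smul6 b v) (smul6 c w)) = zero6 \<longrightarrow> a = 0 \<and> b = 0 \<and> c = 0) \<and>
        P = {pt (add6 (smul6 a u) (add6 (smul6 b v) (smul6 c w))) | a b c.
               a \<in> Fq q \<and> b \<in> Fq q \<and> c \<in> Fq q \<and>
               add6 (smul6 a u) (add6 (smul6 b v) (smul6 c w)) \<noteq> zero6})"

definition W_plane :: "nat \<Rightarrow> 'a::field \<Rightarrow> 'a vec6 set set \<Rightarrow> bool" where
  "W_plane q \<omega> P \<longleftrightarrow> Sigma_plane q P \<and> (\<forall>X\<in>P. \<forall>Y\<in>P. perp q \<omega> X Y)"

text \<open>The lines of the spread S: S_t (t in F_{q^2}, encoded Some t) and S_infinity (None),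
  as sets of projective points.\<close>
fun S_line :: "nat \<Rightarrow> 'a::field option \<Rightarrow> 'a vec6 set set" where
  "S_line q (Some t) = {pt (l, l^q, l*t + l^q*t^q, l^q*t^(2*q), l*t^2, 0) | l. l \<noteq> 0}"
| "S_line q None = {pt (0, 0, 0, l^q, l, 0) | l. l \<noteq> 0}"

fun Mapp :: "nat \<Rightarrow> 'a::field \<Rightarrow> 'a \<Rightarrow> 'a \<Rightarrow> 'a \<Rightarrow> 'a \<Rightarrow> 'a vec6 \<Rightarrow> 'a vec6" where
  "Mapp q \<omega> a b c d (x1,x2,x3,x4,x5,x6) =
    (a^2*x1 + c^2*x5 + (c*(a + c*\<omega>^q)/\<omega>)*x6,
     a^(2*q)*x2 + c^(2*q)*x4 + (c^q*(a^q + c^q*\<omega>)/\<omega>^q)*x6,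
     a*b*x1 + a^q*b^q*x2 + x3 + c^q*d^q*x4 + c*d*x5
       + (d*(a + c*\<omega>^q)/\<omega> + d^q*(a^q + c^q*\<omega>)/\<omega>^q + 1/\<omega>^(q+1))*x6,
     b^(2*q)*x2 + d^(2*q)*x4 + ((d^q*(b^q + d^q*\<omega>) + \<omega>)/\<omega>^q)*x6,
     b^2*x1 + d^2*x5 + ((d*(b + d*\<omega>^q) + \<omega>^q)/\<omega>)*x6,
     x6)"

definition S_gamma :: "nat \<Rightarrow> 'a::field \<Rightarrow> 'a \<Rightarrow> 'a vec6" where
  "S_gamma q \<omega> \<gamma> = (\<gamma>/\<omega>, \<gamma>^q/\<omega>^q, \<omega>^q*\<gamma>/\<omega> + \<omega>*\<gamma>^q/\<omega>^q, 1, 1, 1)"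

definition S_gamma_orbit :: "nat \<Rightarrow> 'a::field \<Rightarrow> 'a \<Rightarrow> 'a vec6 set set" where
  "S_gamma_orbit q \<omega> \<gamma> = {pt (Mapp q \<omega> a b c d (S_gamma q \<omega> \<gamma>)) | a b c d. a*d + b*c = 1}"

end

theory Submission imports Defs begin

lemma card_zero_field:
  shows "of_nat (card (UNIV::'a::{finite,field} set)) = (0::'a)"
proof -
  have "(\<Sum>x\<in>UNIV. x + 1) = (\<Sum>x\<in>(\<lambda>x. x+1) ` UNIV. x::'a)"
    by (subst sum.reindex) (auto simp: inj_on_def)
  also have "(\<lambda>x::'a. x+1) ` UNIV = UNIV"
    by (rule surj_plus_right)
  finally have "(\<Sum>x\<in>UNIV. x) + of_nat (card (UNIV::'a set)) = (\<Sum>x\<in>UNIV. x::'a)"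
    by (simp add: sum.distrib)
  thus ?thesis by simp
qed

lemma fermat_field:
  fixes x :: "'a::{finite,field}"
  shows "x ^ card (UNIV::'a set) = x"
proof (cases "x = 0")
  case True thus ?thesis by (simp add: finite_UNIV_card_ge_0)
next
  case False
  let ?S = "UNIV - {0::'a}"
  have "(\<Prod>y\<in>?S. x*y) = (\<Prod>y\<in>(\<lambda>y. x*y) ` ?S. y)"
    using False by (subst prod.reindex) (auto simp: inj_on_def)
  also have "(\<lambda>y. x*y) ` ?S = ?S"
  proof
    show "(\<lambda>y. x*y) ` ?S \<subseteq> ?S" using False by auto
    show "?S \<subseteq> (\<lambda>y. x*y) ` ?S"
    proof
      fix z assume "z \<in> ?S"
      hence "z = x * (z/x)" "z/x \<in> ?S" using False by auto
      thus "z \<in> (\<lambda>y. x*y) ` ?S" by blast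
    qed
  qed
  finally have "x ^ card ?S * (\<Prod>y\<in>?S. y) = (\<Prod>y\<in>?S. y)"
    by (simp add: prod.distrib)
  moreover have "(\<Prod>y\<in>?S. y) \<noteq> 0" by simp
  ultimately have "x ^ card ?S = 1" by simp
  moreover have "card ?S = card (UNIV::'a set) - 1" by (simp add: card_Diff_singleton)
  moreover have "card (UNIV::'a set) \<ge> 1" using finite_UNIV_card_ge_0[where 'a='a] by simp
  ultimately have "x ^ card (UNIV::'a set) = x ^ card ?S * x"
    by (metis One_nat_def Suc_pred' le_numeral_extra(2) not_less power_Suc2 zero_less_one less_le_trans)
  thus ?thesis using \<open>x ^ card ?S = 1\<close> by simp
qed

lemma frob_add:
  fixes u v :: "'a::field"
  assumes "(2::'a) = 0"
  shows "(u+v)^(2^e) = u^(2^e) + v^(2^e)"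
proof (induction e)
  case 0 thus ?case by simp
next
  case (Suc e)
  have "(u+v)^(2^Suc e) = ((u+v)^(2^e))^2" by (simp add: power_mult[symmetric] mult.commute)
  also have "\<dots> = (u^(2^e))^2 + (v^(2^e))^2 + 2*u^(2^e)*v^(2^e)"
    by (simp add: Suc power2_eq_square algebra_simps)
  also have "\<dots> = u^(2^Suc e) + v^(2^Suc e)"
    using assms by (simp add: power_mult[symmetric] mult.commute)
  finally show ?case .
qed

lemma no_root:
  fixes \<gamma> r :: "'a::field"
  assumes "irreducible [:\<gamma>, 1, 1:]"
  shows "\<gamma> + r + r^2 \<noteq> 0"
proof
  assume h: "\<gamma> + r + r^2 = 0"
  have "poly [:\<gamma>, 1, 1:] r = 0" using h by (simp add: power2_eq_square algebra_simps)
  hence d: "[:-r,1:] dvd [:\<gamma>, 1, 1:]" using poly_eq_0_iff_dvd by blast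
  from irreducibleD'[OF assms d] show False
  proof
    assume "[:\<gamma>, 1, 1:] dvd [:-r,1:]"
    from dvd_imp_degree_le[OF this] show False by simp
  next
    assume "is_unit [:-r,1:]"
    thus False by (simp add: is_unit_iff_degree)
  qed
qed

lemma N_nonzero:
  fixes \<gamma> x y :: "'a::field"
  assumes "irreducible [:\<gamma>, 1, 1:]" "(x,y) \<noteq> (0,0)"
  shows "\<gamma>*x^2 + x*y + y^2 \<noteq> 0"
proof (cases "x = 0")
  case True thus ?thesis using assms by auto
next
  case False
  have "\<gamma> + y/x + (y/x)^2 \<noteq> 0" by (rule no_root[OF assms(1)])
  hence "x^2 * (\<gamma> + y/x + (y/x)^2) \<noteq> 0" using False by simp
  moreover have "x^2 * (\<gamma> + y/x + (y/x)^2) = \<gamma>*x^2 + x*y + y^2"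
    using False by (simp add: field_simps power2_eq_square)
  ultimately show ?thesis by simp
qed

lemma root_count:
  fixes A B :: "'a::{finite,field}"
  assumes "card (UNIV::'a set) = q^2" "q \<ge> 2" "\<forall>l. l \<noteq> 0 \<longrightarrow> A*l + B*l^q = 0"
  shows "A = 0"
proof (rule ccontr)
  assume A: "A \<noteq> 0"
  define p where "p = [:0, A:] + monom B q"
  have "coeff p 1 = A" using assms(2) by (simp add: p_def coeff_monom)
  hence p0: "p \<noteq> 0" using A by auto
  have "degree [:0,A:] \<le> q" using assms(2) by simp
  moreover have "degree (monom B q) \<le> q" by (rule degree_monom_le)
  ultimately have "degree p \<le> q" unfolding p_def by (rule degree_add_le)
  have "poly p x = 0" for x
    using assms(3) assms(2) by (cases "x = 0") (auto simp: p_def poly_monom algebra_simps)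
  hence "{x. poly p x = 0} = UNIV" by auto
  hence "q^2 \<le> q" using card_poly_roots_bound[OF p0] \<open>degree p \<le> q\<close> assms(1) by simp
  thus False using assms(2) by (simp add: power2_eq_square)
qed

lemma in_pt: "v \<in> pt v"
  unfolding pt_def by (cases v) (auto intro!: exI[of _ 1])

lemma hform_line:
  fixes l t x1 x2 x3 x4 x5 x6 \<omega> :: "'a::field"
  assumes fr: "\<And>u::'a. (u^q)^q = u" and ad: "\<And>u v::'a. (u+v)^q = u^q + v^q" and q0: "q > 0"
  shows "hform q \<omega> (x1,x2,x3,x4,x5,x6) (l, l^q, l*t + l^q*t^q, l^q*t^(2*q), l*t^2, 0)
     = l*(\<omega>*x1*t^2 + \<omega>*x5 + x6*t + \<omega>^q*x6) + l^q*(\<omega>^q*x2*t^(2*q) + \<omega>^q*x4 + x6*t^q + \<omega>*x6)"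
proof -
  have t2: "t^(2*q) = (t^q)^2" by (simp add: power_mult[symmetric] mult.commute)
  have t3: "((t^q)^2)^q = t^2"
    by (metis fr power_mult mult.commute)
  have e1: "(l^q*t^(2*q))^q = l*t^2"
    by (simp only: t2 power_mult_distrib t3 fr)
  have e2: "(l*t^2)^q = l^q*t^(2*q)"
    by (simp add: power_mult_distrib power_mult[symmetric] mult.commute)
  have e3: "(l*t + l^q*t^q)^q = l^q*t^q + l*t"
    by (simp add: ad power_mult_distrib fr)
  have e4: "(0::'a)^q = 0" using q0 by simp
  show ?thesis
    by (simp only: hform.simps e1 e2 e3 e4 fr) (simp add: algebra_simps)
qed

lemma hform_inf:
  fixes l x1 x2 x3 x4 x5 x6 \<omega> :: "'a::field"
  assumes fr: "\<And>u::'a. (u^q)^q = u" and q0: "q > 0"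
  shows "hform q \<omega> (x1,x2,x3,x4,x5,x6) (0, 0, 0, l^q, l, 0)
     = l*(\<omega>*x1) + l^q*(\<omega>^q*x2)"
proof -
  have e4: "(0::'a)^q = 0" using q0 by simp
  show ?thesis
    by (simp only: hform.simps e4 fr) (simp add: algebra_simps)
qed

lemma A_calc:
  fixes a b c d t \<omega> \<gamma> wq :: "'a::field"
  assumes two: "(2::'a) = 0" and om0: "\<omega> \<noteq> 0" and wq: "\<omega> + wq = 1" and det: "a*d+b*c = 1"
  shows "\<omega>*(a^2*(\<gamma>/\<omega>) + c^2*1 + (c*(a + c*wq)/\<omega>)*1)*t^2
      + \<omega>*(b^2*(\<gamma>/\<omega>) + d^2*1 + ((d*(b + d*wq) + wq)/\<omega>)*1) + 1*t + wq*1
    = \<gamma>*(a*t+b)^2 + (a*t+b)*(c*t+d) + (c*t+d)^2"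
proof -
  have w: "wq = 1 - \<omega>" using wq by (simp add: algebra_simps)
  have 1: "\<omega>*(a^2*(\<gamma>/\<omega>) + c^2*1 + (c*(a + c*wq)/\<omega>)*1) = a^2*\<gamma> + a*c + c^2"
    using om0 by (simp add: field_simps w power2_eq_square)
  have 2: "\<omega>*(b^2*(\<gamma>/\<omega>) + d^2*1 + ((d*(b + d*wq) + wq)/\<omega>)*1) = b^2*\<gamma> + b*d + d^2 + wq"
    using om0 by (simp add: field_simps w power2_eq_square)
  have "(a^2*\<gamma> + a*c + c^2)*t^2 + (b^2*\<gamma> + b*d + d^2 + wq) + t + wq
     = \<gamma>*(a*t+b)^2 + (a*t+b)*(c*t+d) + (c*t+d)^2 + (1 - (a*d+b*c))*t + 2*(wq - \<gamma>*a*t*b - c*t*d)"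
    by (simp add: algebra_simps power2_eq_square)
  also have "\<dots> = \<gamma>*(a*t+b)^2 + (a*t+b)*(c*t+d) + (c*t+d)^2" using two det by simp
  finally show ?thesis using 1 2 by simp
qed

theorem mainTheorem15:
  fixes q :: nat and \<omega> \<gamma> :: "'a::{finite,field}" and P :: "'a vec6 set set"
  assumes q_even_pp: "\<exists>e\<ge>1. q = 2 ^ e"
    and card: "card (UNIV :: 'a set) = q ^ 2"
    and om: "\<omega> \<notin> Fq q" "\<omega> + \<omega> ^ q = 1"
    and irr: "irreducible [:\<gamma>, 1, 1:]"
    and plane: "W_plane q \<omega> P"
    and contains: "\<exists>t. S_line q t \<subseteq> P"
  shows "P \<inter> S_gamma_orbit q \<omega> \<gamma> = {}"
proof (rule ccontr)
  assume "P \<inter> S_gamma_orbit q \<omega> \<gamma> \<noteq> {}"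
  then obtain X where XP: "X \<in> P" and XO: "X \<in> S_gamma_orbit q \<omega> \<gamma>" by blast
  obtain e where e: "e \<ge> 1" "q = 2^e" using q_even_pp by blast
  have q2: "q \<ge> 2" using e by (metis one_le_numeral power_increasing power_one_right)
  hence q0: "q > 0" by simp
  have "(2::'a)^(2*e) = 0"
    using card_zero_field[where 'a='a] card e by (simp add: power_mult[symmetric] mult.commute)
  hence two: "(2::'a) = 0" by simp
  have fr: "(u^q)^q = u" for u :: 'a
    using fermat_field[of u] card by (simp add: power_mult[symmetric] power2_eq_square)
  have ad: "(u+v)^q = u^q + v^q" for u v :: 'a
    using frob_add[OF two] e by simp
  have om0: "\<omega> \<noteq> 0" using om(1) q0 by (auto simp: Fq_def)
  obtain a b c d where X: "X = pt (Mapp q \<omega> a b c d (S_gamma q \<omega> \<gamma>))" and det: "a*d+b*c = 1"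
    using XO unfolding S_gamma_orbit_def by blast
  obtain r1 r2 r3 r4 r5 r6 where R: "Mapp q \<omega> a b c d (S_gamma q \<omega> \<gamma>) = (r1,r2,r3,r4,r5,r6)"
    by (metis prod_cases6)
  have r1: "r1 = a^2*(\<gamma>/\<omega>) + c^2*1 + (c*(a + c*\<omega>^q)/\<omega>)*1"
   and r5: "r5 = b^2*(\<gamma>/\<omega>) + d^2*1 + ((d*(b + d*\<omega>^q) + \<omega>^q)/\<omega>)*1"
   and r6: "r6 = 1"
    using R by (simp_all add: S_gamma_def)
  have RX: "(r1,r2,r3,r4,r5,r6) \<in> X" using X R in_pt by metis
  have perpP: "\<forall>X\<in>P. \<forall>Y\<in>P. perp q \<omega> X Y" using plane by (simp add: W_plane_def)
  obtain to where to: "S_line q to \<subseteq> P" using contains by blast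
  show False
  proof (cases to)
    case None
    have "\<forall>l. l \<noteq> 0 \<longrightarrow> (\<omega>*r1)*l + (\<omega>^q*r2)*l^q = 0"
    proof (intro allI impI)
      fix l :: 'a assume l: "l \<noteq> 0"
      have "pt (0,0,0,l^q,l,0) \<in> P" using to None l by auto
      hence "perp q \<omega> X (pt (0,0,0,l^q,l,0))" using perpP XP by blast
      hence "hform q \<omega> (r1,r2,r3,r4,r5,r6) (0,0,0,l^q,l,0) = 0"
        using RX in_pt unfolding perp_def by blast
      thus "(\<omega>*r1)*l + (\<omega>^q*r2)*l^q = 0" unfolding hform_inf[OF fr q0] by (simp add: algebra_simps)
    qed
    hence "\<omega>*r1 = 0" using root_count[OF card q2] by blast
    moreover have "\<omega>*r1 = \<gamma>*a^2 + a*c + c^2"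
    proof -
      have w: "\<omega>^q = 1 - \<omega>" using om(2) by (simp add: algebra_simps)
      show ?thesis using om0 unfolding r1 by (simp add: field_simps w power2_eq_square)
    qed
    moreover have "\<gamma>*a^2 + a*c + c^2 \<noteq> 0"
    proof (rule N_nonzero[OF irr])
      show "(a, c) \<noteq> (0, 0)" using det by auto
    qed
    ultimately show False by simp
  next
    case (Some t)
    let ?A = "\<omega>*r1*t^2 + \<omega>*r5 + r6*t + \<omega>^q*r6"
    let ?B = "\<omega>^q*r2*t^(2*q) + \<omega>^q*r4 + r6*t^q + \<omega>*r6"
    have "\<forall>l. l \<noteq> 0 \<longrightarrow> ?A*l + ?B*l^q = 0"
    proof (intro allI impI)
      fix l :: 'a assume l: "l \<noteq> 0"
      have "pt (l, l^q, l*t + l^q*t^q, l^q*t^(2*q), l*t^2, 0) \<in> P" using to Some l by auto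
      hence "perp q \<omega> X (pt (l, l^q, l*t + l^q*t^q, l^q*t^(2*q), l*t^2, 0))" using perpP XP by blast
      hence "hform q \<omega> (r1,r2,r3,r4,r5,r6) (l, l^q, l*t + l^q*t^q, l^q*t^(2*q), l*t^2, 0) = 0"
        using RX in_pt unfolding perp_def by blast
      thus "?A*l + ?B*l^q = 0" unfolding hform_line[OF fr ad q0] by (simp add: algebra_simps)
    qed
    hence "?A = 0" using root_count[OF card q2] by blast
    moreover have "?A = \<gamma>*(a*t+b)^2 + (a*t+b)*(c*t+d) + (c*t+d)^2"
      using A_calc[OF two om0 om(2) det, of \<gamma> t] r1 r5 r6 by (simp add: algebra_simps)
    moreover have "\<gamma>*(a*t+b)^2 + (a*t+b)*(c*t+d) + (c*t+d)^2 \<noteq> 0"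
    proof (rule N_nonzero[OF irr], rule notI)
      assume "(a*t+b, c*t+d) = (0,0)"
      hence "b = -(a*t)" "d = -(c*t)" by (auto simp: add_eq_0_iff)
      thus False using det two by (simp add: algebra_simps)
    qed
    ultimately show False by simp
  qed
qed

end
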